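(* Let $\alpha$ be a nonzero real number. Let $p_1,p_2\in\mathbb S^2$ be two points lying on a common geodesic (great circle) with $N$. (1) If $p_1$ and $p_2$ lie on the same ray starting at $N$, then the piece of this ray joining $p_1$ and $p_2$ minimizes $E_\alpha$ among all curves in $\mathbb S^2$ joining $p_1$ and $p_2$, for every such $\alpha$. (2) Suppose $\alpha>0$. If the minimizing geodesic from $p_1$ to $p_2$ contains $N$, then this geodesic minimizes $E_\alpha$ among all curves in $\mathbb S^2$ joining $p_1$ and $p_2$.
   Context: $\mathbb S^2\subset\mathbb R^3$ is the unit sphere with the Euclidean metric. It is parametrized by $\Psi(u,v)=(\sin u\cos v,\sin u\sin v,\cos u)$, and $N=(0,0,1)$. The spherical distance from $\Psi(u,v)$ to $N$ is $u\in[0,\pi]$. A ray starting at $N$ is a length-minimizing geodesic starting at $N$, i.e. $u\mapsto\Psi(u,v_0)$, $u\in[0,\pi]$, for some fixed $v_0$. For a curve $\gamma$, the energy is $E_\alpha[\gamma]=\int_\gamma\mathsf d^\alpha\,ds$, where $s$ is arc length and $\mathsf d$ is the spherical distance to $N$. In coordinates, $$E_\alpha[\gamma]=\int u^\alpha\sqrt{u'^2+\sin^2(u)v'^2}\,dt.$$ The paper discards the case $\alpha=0$. *)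

theory Defs
  imports "HOL-Analysis.Analysis"
begin

definition Psi :: "real \<Rightarrow> real \<Rightarrow> real^3" where
  "Psi u v = vector [sin u * cos v, sin u * sin v, cos u]"

definition NP :: "real^3" where
  "NP = vector [0, 0, 1]"

definition sdistN :: "real^3 \<Rightarrow> real" where
  "sdistN x = arccos (x \<bullet> NP)"

definition admissible :: "(real \<Rightarrow> real^3) \<Rightarrow> real^3 \<Rightarrow> real^3 \<Rightarrow> bool" where
  "admissible \<gamma> p q \<longleftrightarrow> \<gamma> piecewise_C1_differentiable_on {0..1} \<and>
     \<gamma> ` {0..1} \<subseteq> sphere 0 1 \<and> \<gamma> 0 = p \<and> \<gamma> 1 = q"

definition energy :: "real \<Rightarrow> (real \<Rightarrow> real^3) \<Rightarrow> ennreal" where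
  "energy \<alpha> \<gamma> = (\<integral>\<^sup>+ t. indicator {0..1} t *
      ennreal (sdistN (\<gamma> t) powr \<alpha> * norm (vector_derivative \<gamma> (at t))) \<partial>lborel)"

end

theory Submission
  imports Defs
begin

definition clamp1 :: "real \<Rightarrow> real" where "clamp1 z = max (-1) (min 1 z)"

locale cutfun =
  fixes g :: "real \<Rightarrow> real" and \<delta> :: real
  assumes contg: "continuous_on UNIV g"
    and dpos: "\<delta> > 0"
    and glow: "\<And>s. s \<in> {0..\<delta>} \<Longrightarrow> g s = 0"
    and ghigh: "\<And>s. s \<in> {pi-\<delta>..pi} \<Longrightarrow> g s = 0"
begin

definition G :: "real \<Rightarrow> real" where "G s = integral {0..s} g"

definition H :: "real \<Rightarrow> real" where "H z = G (arccos (clamp1 z))"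

definition H' :: "real \<Rightarrow> real" where
  "H' z = (if \<bar>z\<bar> < 1 then - g (arccos z) / sqrt (1 - z^2) else 0)"

lemma intg: "g integrable_on {a..b}"
  by (rule integrable_continuous_real) (use contg continuous_on_subset in blast)

lemma G_deriv: "s \<in> {0<..<pi} \<Longrightarrow> (G has_real_derivative g s) (at s)"
proof -
  assume s: "s \<in> {0<..<pi}"
  have "(G has_real_derivative g s) (at s within {0..pi})"
    unfolding G_def by (rule integral_has_real_derivative) (use s contg continuous_on_subset in auto)
  moreover have "at s within {0..pi} = at s"
    by (rule at_within_interior) (use s in auto)
  ultimately show ?thesis by simp
qed

lemma G_cont: "continuous_on {0..pi} G"
  unfolding G_def by (rule indefinite_integral_continuous_1) (rule intg)

lemma G_low: "s \<in> {0..\<delta>} \<Longrightarrow> G s = 0"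
proof -
  assume s: "s \<in> {0..\<delta>}"
  have "integral {0..s} g = integral {0..s} (\<lambda>_. 0)"
    by (rule integral_cong) (use s glow in auto)
  then show ?thesis by (simp add: G_def)
qed

lemma G_high: "s \<in> {pi-\<delta>..pi} \<Longrightarrow> 0 \<le> s \<Longrightarrow> G s = G pi"
proof -
  assume s: "s \<in> {pi-\<delta>..pi}" "0 \<le> s"
  have "integral {0..s} g + integral {s..pi} g = integral {0..pi} g"
    using Henstock_Kurzweil_Integration.integral_combine[where a=0 and c=s and b=pi and f=g] s intg by auto
  moreover have "integral {s..pi} g = integral {s..pi} (\<lambda>_. 0)"
    by (rule integral_cong) (use s ghigh in auto)
  ultimately show ?thesis by (simp add: G_def)
qed

lemma H_deriv: "(H has_real_derivative H' z) (at z)"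
proof -
  define d where "d = min \<delta> (pi/2)"
  have d: "0 < d" "d \<le> \<delta>" "d \<le> pi/2" using dpos by (auto simp: d_def)
  define c where "c = cos d"
  have c: "0 \<le> c" "c < 1"
    using d cos_monotone_0_pi[of 0 d] unfolding c_def by (auto intro!: cos_ge_zero)
  have arccos_c: "arccos c = d" using d by (simp add: c_def arccos_cos)
  consider "z > c" | "z < -c" | "\<bar>z\<bar> \<le> c" by linarith
  then show ?thesis
  proof cases
    case 1
    have "(H has_real_derivative 0) (at z)"
    proof (rule has_field_derivative_transform_within_open[of "\<lambda>_. 0" 0 z "{c<..}"])
      fix y assume y: "y \<in> {c<..}"
      have cl: "c \<le> clamp1 y" "clamp1 y \<le> 1" using y c by (auto simp: clamp1_def)
      have "arccos (clamp1 y) \<le> arccos c"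
        by (rule arccos_le_arccos) (use cl c in auto)
      moreover have "0 \<le> arccos (clamp1 y)" using cl c by (intro arccos_lbound) auto
      ultimately have "arccos (clamp1 y) \<in> {0..\<delta>}" using arccos_c d by auto
      then show "0 = H y" by (simp add: H_def G_low)
    qed (use 1 in auto)
    moreover have "H' z = 0"
    proof (cases "\<bar>z\<bar> < 1")
      case True
      have "arccos z \<le> arccos c"
        by (rule arccos_le_arccos) (use True c 1 in auto)
      moreover have "0 \<le> arccos z" using True by (intro arccos_lbound) auto
      ultimately have "arccos z \<in> {0..\<delta>}" using arccos_c d by auto
      then show ?thesis by (simp add: H'_def glow)
    qed (simp add: H'_def)
    ultimately show ?thesis by simp
  next
    case 2
    have "(H has_real_derivative 0) (at z)"
    proof (rule has_field_derivative_transform_within_open[of "\<lambda>_. G pi" 0 z "{..< -c}"])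
      fix y assume y: "y \<in> {..< -c}"
      have cl: "-1 \<le> clamp1 y" "clamp1 y \<le> -c" using y c by (auto simp: clamp1_def)
      have "arccos (-c) \<le> arccos (clamp1 y)"
        by (rule arccos_le_arccos) (use cl c in auto)
      moreover have "arccos (clamp1 y) \<le> pi" using cl c by (intro arccos_ubound) auto
      moreover have "arccos (-c) = pi - d" using arccos_c c by (simp add: arccos_minus)
      ultimately have "arccos (clamp1 y) \<in> {pi-\<delta>..pi}" using d by auto
      moreover have "0 \<le> arccos (clamp1 y)" using cl c by (intro arccos_lbound) auto
      ultimately show "G pi = H y" using G_high[of "arccos (clamp1 y)"] by (simp add: H_def)
    qed (use 2 in auto)
    moreover have "H' z = 0"
    proof (cases "\<bar>z\<bar> < 1")
      case True
      have "arccos (-c) \<le> arccos z"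
        by (rule arccos_le_arccos) (use True c 2 in auto)
      moreover have "arccos z \<le> pi" using True by (intro arccos_ubound) auto
      moreover have "arccos (-c) = pi - d" using arccos_c c by (simp add: arccos_minus)
      ultimately have "arccos z \<in> {pi-\<delta>..pi}" using d by auto
      then show ?thesis by (simp add: H'_def ghigh)
    qed (simp add: H'_def)
    ultimately show ?thesis by simp
  next
    case 3
    then have z: "-1 < z" "z < 1" using c by auto
    have a: "arccos z \<in> {0<..<pi}" using z arccos_lt_bounded[of z] by auto
    have "((\<lambda>y. G (arccos y)) has_real_derivative g (arccos z) * inverse (- sqrt (1 - z\<^sup>2))) (at z)"
      by (rule DERIV_chain2[OF G_deriv[OF a] DERIV_arccos[OF z]])
    then have "((\<lambda>y. G (arccos y)) has_real_derivative H' z) (at z)"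
      using z by (simp add: H'_def divide_simps abs_less_iff)
    then show ?thesis
      by (rule has_field_derivative_transform_within_open[of _ _ z "{-1<..<1}"])
         (use z in \<open>auto simp: H_def clamp1_def\<close>)
  qed
qed

end

lemma integral_le_nn:
  fixes k f :: "real \<Rightarrow> real"
  assumes I: "(k has_integral I) {a..b}"
    and N: "finite N"
    and le: "\<And>t. t \<in> {a..b} - N \<Longrightarrow> k t \<le> f t"
    and fnn: "\<And>t. 0 \<le> f t"
  shows "ennreal I \<le> (\<integral>\<^sup>+ t. indicator {a..b} t * ennreal (f t) \<partial>lborel)"
proof -
  define m where "m x = k x * indicator {a..b} x" for x
  have "m \<in> borel_measurable (completion lborel)"
    unfolding m_def by (rule has_integral_implies_lebesgue_measurable_real[OF I])
  from completion_ex_borel_measurable_real[OF this]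
  obtain m' where m'[measurable]: "m' \<in> borel_measurable lborel" and ae: "AE x in lborel. m x = m' x"
    by blast
  have meq: "(\<lambda>x. if x \<in> {a..b} then k x else 0) = m"
    by (auto simp: m_def fun_eq_iff)
  have "(m has_integral I) UNIV"
    using has_integral_restrict_UNIV[THEN iffD2, OF I] unfolding meq .
  then have m'I: "(m' has_integral I) UNIV"
    using ae by (subst has_integral_AE[symmetric]) (auto elim: AE_mp)
  define q where "q x = max (m' x) 0" for x
  have q[measurable]: "q \<in> borel_measurable lborel" unfolding q_def by measurable
  have aeN: "AE x in lborel. x \<notin> N"
    by (rule AE_not_in) (rule finite_imp_null_set_lborel[OF N])
  have qle: "(\<integral>\<^sup>+ x. ennreal (q x) \<partial>lborel) \<le> (\<integral>\<^sup>+ t. indicator {a..b} t * ennreal (f t) \<partial>lborel)"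
  proof (rule nn_integral_mono_AE)
    show "AE x in lborel. ennreal (q x) \<le> indicator {a..b} x * ennreal (f x)"
      using ae aeN
    proof eventually_elim
      case (elim x)
      show ?case
      proof (cases "x \<in> {a..b}")
        case True
        then have "k x \<le> f x" using le elim by auto
        then have "q x \<le> f x" using elim True fnn[of x] by (auto simp: q_def m_def)
        then show ?thesis using True by (simp add: ennreal_leI)
      next
        case False
        then show ?thesis using elim by (simp add: q_def m_def)
      qed
    qed
  qed
  show ?thesis
  proof (cases "(\<integral>\<^sup>+ x. ennreal (q x) \<partial>lborel) = \<infinity>")
    case True
    then show ?thesis using qle by (simp add: top_unique)
  next
    case False
    then obtain r where r: "(\<integral>\<^sup>+ x. ennreal (q x) \<partial>lborel) = ennreal r" "0 \<le> r"
      by (cases "(\<integral>\<^sup>+ x. ennreal (q x) \<partial>lborel)" rule: ennreal_cases) auto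
    have "(q has_integral r) UNIV"
      by (rule nn_integral_has_integral[OF _ _ r(1) r(2)]) (auto simp: q_def)
    then have "I \<le> r"
      by (rule has_integral_le[OF m'I]) (auto simp: q_def)
    then have "ennreal I \<le> ennreal r" by (rule ennreal_leI)
    then show ?thesis using qle r by (metis order_trans)
  qed
qed

lemma inner3: "(x::real^3) \<bullet> y = x$1*y$1 + x$2*y$2 + x$3*y$3"
  by (simp add: inner_vec_def sum_3)

lemma Psi_inner: "Psi u v \<bullet> Psi u' v' = sin u * sin u' * cos (v - v') + cos u * cos u'"
  by (simp add: Psi_def inner3 cos_diff algebra_simps)

lemma Psi_N: "Psi u v \<bullet> NP = cos u"
  by (simp add: Psi_def NP_def inner3)

lemma norm_Psi: "norm (Psi u v) = 1"
proof -
  have "Psi u v \<bullet> Psi u v = 1" by (simp add: Psi_inner flip: power2_eq_square)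
  then show ?thesis by (simp add: norm_eq_sqrt_inner)
qed

lemma norm_NP: "norm NP = 1"
  by (simp add: norm_eq_sqrt_inner NP_def inner3)

lemma unit_inner_bound:
  fixes x y :: "'a::real_inner"
  assumes "norm x = 1" "norm y = 1"
  shows "\<bar>x \<bullet> y\<bar> \<le> 1"
  using Cauchy_Schwarz_ineq2[of x y] assms by simp

lemma sph_tri:
  fixes x y z :: "'a::real_inner"
  assumes nx: "norm x = 1" and ny: "norm y = 1" and nz: "norm z = 1"
  shows "arccos (x \<bullet> z) \<le> arccos (x \<bullet> y) + arccos (y \<bullet> z)"
proof -
  define a where "a = arccos (x \<bullet> y)"
  define b where "b = arccos (y \<bullet> z)"
  have bxy: "\<bar>x \<bullet> y\<bar> \<le> 1" "\<bar>y \<bullet> z\<bar> \<le> 1" "\<bar>x \<bullet> z\<bar> \<le> 1"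
    using unit_inner_bound assms by blast+
  have a: "0 \<le> a" "a \<le> pi" "cos a = x \<bullet> y" "sin a = sqrt (1 - (x \<bullet> y)^2)"
    using bxy by (auto simp: a_def arccos_lbound arccos_ubound sin_arccos abs_le_iff)
  have b: "0 \<le> b" "b \<le> pi" "cos b = y \<bullet> z" "sin b = sqrt (1 - (y \<bullet> z)^2)"
    using bxy by (auto simp: b_def arccos_lbound arccos_ubound sin_arccos abs_le_iff)
  show ?thesis
  proof (cases "a + b \<le> pi")
    case False
    then show ?thesis using arccos_ubound[of "x \<bullet> z"] bxy
      by (simp add: a_def b_def abs_le_iff)
  next
    case True
    define x' where "x' = x - (x \<bullet> y) *\<^sub>R y"
    define z' where "z' = z - (y \<bullet> z) *\<^sub>R y"
    have yy: "y \<bullet> y = 1" using ny by (simp add: norm_eq_sqrt_inner)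
    have xx: "x \<bullet> x = 1" using nx by (simp add: norm_eq_sqrt_inner)
    have zz: "z \<bullet> z = 1" using nz by (simp add: norm_eq_sqrt_inner)
    have nx': "norm x' = sqrt (1 - (x \<bullet> y)^2)"
    proof -
      have "x' \<bullet> x' = 1 - (x \<bullet> y)^2"
        unfolding x'_def by (simp add: inner_diff_left inner_diff_right yy xx inner_commute power2_eq_square)
      then show ?thesis by (simp add: norm_eq_sqrt_inner)
    qed
    have nz': "norm z' = sqrt (1 - (y \<bullet> z)^2)"
    proof -
      have "z' \<bullet> z' = 1 - (y \<bullet> z)^2"
        unfolding z'_def by (simp add: inner_diff_left inner_diff_right yy zz inner_commute power2_eq_square)
      then show ?thesis by (simp add: norm_eq_sqrt_inner)
    qed
    have eq: "x \<bullet> z = (x \<bullet> y) * (y \<bullet> z) + x' \<bullet> z'"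
      unfolding x'_def z'_def by (simp add: inner_diff_left inner_diff_right yy inner_commute algebra_simps)
    have "x' \<bullet> z' \<ge> - (norm x' * norm z')"
      using Cauchy_Schwarz_ineq2[of x' z'] by linarith
    then have "x \<bullet> z \<ge> cos (a + b)"
      using eq nx' nz' by (simp add: cos_add a b)
    then have "arccos (x \<bullet> z) \<le> arccos (cos (a + b))"
      using bxy by (intro arccos_le_arccos) (auto simp: abs_le_iff)
    also have "\<dots> = a + b" using True a b by (simp add: arccos_cos)
    finally show ?thesis by (simp add: a_def b_def)
  qed
qed

lemma arccos_cos_abs: "\<bar>x\<bar> \<le> pi \<Longrightarrow> arccos (cos x) = \<bar>x\<bar>"
  by (metis abs_ge_zero arccos_cos cos_abs_real)


context cutfun begin

lemma energy_lower:
  fixes \<gamma> :: "real \<Rightarrow> real^3" and P :: "real^3"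
  assumes pw: "\<gamma> piecewise_C1_differentiable_on {0..1}"
    and sph: "\<gamma> ` {0..1} \<subseteq> sphere 0 1"
    and P: "norm P = 1"
    and bound: "\<And>x. x \<in> sphere 0 1 \<Longrightarrow> \<bar>g (arccos (x \<bullet> P))\<bar> \<le> sdistN x powr \<alpha>"
  shows "ennreal \<bar>G (arccos (\<gamma> 1 \<bullet> P)) - G (arccos (\<gamma> 0 \<bullet> P))\<bar> \<le> energy \<alpha> \<gamma>"
proof -
  from pw obtain S0 where S0: "finite S0" and C1: "\<gamma> C1_differentiable_on {0..1} - S0"
    and cont\<gamma>: "continuous_on {0..1} \<gamma>"
    unfolding piecewise_C1_differentiable_on_def by blast
  from C1 obtain D where D: "\<And>t. t \<in> {0..1} - S0 \<Longrightarrow> (\<gamma> has_vector_derivative D t) (at t)"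
    unfolding C1_differentiable_on_def by blast
  define h where "h = (\<lambda>t. H (\<gamma> t \<bullet> P))"
  define h' where "h' = (\<lambda>t. H' (\<gamma> t \<bullet> P) * (D t \<bullet> P))"
  have unit: "norm (\<gamma> t) = 1" if "t \<in> {0..1}" for t using sph that by (auto simp: image_subset_iff)
  have zb: "\<bar>\<gamma> t \<bullet> P\<bar> \<le> 1" if "t \<in> {0..1}" for t using unit_inner_bound[OF unit[OF that] P] .
  have hval: "h t = G (arccos (\<gamma> t \<bullet> P))" if "t \<in> {0..1}" for t
    using zb[OF that] by (simp add: h_def H_def clamp1_def abs_le_iff)
  have hderiv: "(h has_vector_derivative h' t) (at t)" if t: "t \<in> {0<..<1} - S0" for t
  proof -
    have Dt: "(\<gamma> has_derivative (\<lambda>x. x *\<^sub>R D t)) (at t)"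
      using D[of t] t by (auto simp: has_vector_derivative_def)
    have "((\<lambda>s. \<gamma> s \<bullet> P) has_derivative (\<lambda>x. (x *\<^sub>R D t) \<bullet> P)) (at t)"
      by (rule bounded_linear.has_derivative[OF bounded_linear_inner_left Dt])
    then have inner: "((\<lambda>s. \<gamma> s \<bullet> P) has_real_derivative (D t \<bullet> P)) (at t)"
      unfolding has_field_derivative_def by (rule has_derivative_eq_rhs) (auto simp: fun_eq_iff)
    have "((\<lambda>s. H (\<gamma> s \<bullet> P)) has_real_derivative H' (\<gamma> t \<bullet> P) * (D t \<bullet> P)) (at t)"
      by (rule DERIV_chain2[OF H_deriv inner])
    then show ?thesis
      by (simp add: h_def h'_def has_real_derivative_iff_has_vector_derivative)
  qed
  have hcont: "continuous_on {0..1} h"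
  proof -
    have c1: "continuous_on {0..1} (\<lambda>t. \<gamma> t \<bullet> P)"
      by (intro continuous_intros cont\<gamma>)
    have c2: "continuous_on UNIV H"
      by (rule continuous_at_imp_continuous_on) (auto intro: DERIV_isCont[OF H_deriv])
    show ?thesis unfolding h_def
      by (rule continuous_on_compose2[OF c2 c1]) auto
  qed
  have ftc: "(h' has_integral h 1 - h 0) {0..1}"
    by (rule fundamental_theorem_of_calculus_interior_strong[OF S0]) (use hderiv hcont in auto)
  have orth: "D t \<bullet> \<gamma> t = 0" if t: "t \<in> {0<..<1} - S0" for t
  proof -
    have Dt: "(\<gamma> has_derivative (\<lambda>x. x *\<^sub>R D t)) (at t)"
      using D[of t] t by (auto simp: has_vector_derivative_def)
    have "((\<lambda>s. \<gamma> s \<bullet> \<gamma> s) has_derivative (\<lambda>x. \<gamma> t \<bullet> (x *\<^sub>R D t) + (x *\<^sub>R D t) \<bullet> \<gamma> t)) (at t)"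
      by (rule has_derivative_inner[OF Dt Dt])
    then have d1: "((\<lambda>s. \<gamma> s \<bullet> \<gamma> s) has_real_derivative 2 * (D t \<bullet> \<gamma> t)) (at t)"
      unfolding has_field_derivative_def
      by (rule has_derivative_eq_rhs) (auto simp: fun_eq_iff inner_commute algebra_simps)
    have "2 * (D t \<bullet> \<gamma> t) = 0"
    proof (rule DERIV_local_const[OF d1])
      show "0 < min t (1 - t)" using t by auto
      show "\<forall>y. \<bar>t - y\<bar> < min t (1 - t) \<longrightarrow> \<gamma> t \<bullet> \<gamma> t = \<gamma> y \<bullet> \<gamma> y"
      proof (intro allI impI)
        fix y assume "\<bar>t - y\<bar> < min t (1 - t)"
        then have "y \<in> {0..1}" by auto
        then have "\<gamma> y \<bullet> \<gamma> y = 1" using unit[of y] by (simp add: norm_eq_sqrt_inner)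
        moreover have "\<gamma> t \<bullet> \<gamma> t = 1" using unit[of t] t by (simp add: norm_eq_sqrt_inner)
        ultimately show "\<gamma> t \<bullet> \<gamma> t = \<gamma> y \<bullet> \<gamma> y" by simp
      qed
    qed
    then show ?thesis by simp
  qed
  define w where "w t = sdistN (\<gamma> t) powr \<alpha> * norm (vector_derivative \<gamma> (at t))" for t
  have wnn: "0 \<le> w t" for t by (simp add: w_def)
  have hbound: "\<bar>h' t\<bar> \<le> w t" if t: "t \<in> {0..1} - (S0 \<union> {0,1})" for t
  proof -
    have t': "t \<in> {0<..<1} - S0" using t by auto
    have vd: "vector_derivative \<gamma> (at t) = D t"
      using D[of t] t by (auto intro: vector_derivative_at)
    define z where "z = \<gamma> t \<bullet> P"
    have ut: "norm (\<gamma> t) = 1" using unit t by auto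
    have gb: "\<bar>g (arccos z)\<bar> \<le> sdistN (\<gamma> t) powr \<alpha>"
      unfolding z_def by (rule bound) (use ut in auto)
    show ?thesis
    proof (cases "\<bar>z\<bar> < 1")
      case False
      then show ?thesis using wnn[of t] by (simp add: h'_def H'_def z_def)
    next
      case True
      have gg: "\<gamma> t \<bullet> \<gamma> t = 1" using ut by (simp add: norm_eq_sqrt_inner)
      have PP: "P \<bullet> P = 1" using P by (simp add: norm_eq_sqrt_inner)
      have "(P - z *\<^sub>R \<gamma> t) \<bullet> (P - z *\<^sub>R \<gamma> t) = 1 - z^2"
        by (simp add: inner_diff_left inner_diff_right gg PP z_def inner_commute power2_eq_square)
      then have nq: "norm (P - z *\<^sub>R \<gamma> t) = sqrt (1 - z^2)"
        by (simp add: norm_eq_sqrt_inner)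
      have "D t \<bullet> P = D t \<bullet> (P - z *\<^sub>R \<gamma> t)"
        using orth[OF t'] by (simp add: inner_diff_right)
      then have DP: "\<bar>D t \<bullet> P\<bar> \<le> norm (D t) * sqrt (1 - z^2)"
        using Cauchy_Schwarz_ineq2[of "D t" "P - z *\<^sub>R \<gamma> t"] nq by simp
      have sp: "sqrt (1 - z^2) > 0" using True by (simp add: abs_less_iff power2_less_1_iff abs_square_less_1)
      have "\<bar>h' t\<bar> = \<bar>g (arccos z)\<bar> / sqrt (1 - z^2) * \<bar>D t \<bullet> P\<bar>"
        using True sp by (simp add: h'_def H'_def z_def abs_mult abs_divide)
      also have "\<dots> \<le> \<bar>g (arccos z)\<bar> / sqrt (1 - z^2) * (norm (D t) * sqrt (1 - z^2))"
        by (rule mult_left_mono[OF DP]) (use sp in simp)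
      also have "\<dots> = \<bar>g (arccos z)\<bar> * norm (D t)" using sp by simp
      also have "\<dots> \<le> sdistN (\<gamma> t) powr \<alpha> * norm (D t)"
        by (rule mult_right_mono[OF gb]) simp
      finally show ?thesis by (simp add: w_def vd)
    qed
  qed
  have fin: "finite (S0 \<union> {0,1})" using S0 by simp
  have E: "energy \<alpha> \<gamma> = (\<integral>\<^sup>+ t. indicator {0..1} t * ennreal (w t) \<partial>lborel)"
    by (simp add: energy_def w_def)
  have up: "ennreal (h 1 - h 0) \<le> energy \<alpha> \<gamma>"
    unfolding E by (rule integral_le_nn[OF ftc fin _ wnn]) (use hbound in force)
  have dn: "ennreal (- (h 1 - h 0)) \<le> energy \<alpha> \<gamma>"
    unfolding E by (rule integral_le_nn[OF has_integral_neg[OF ftc] fin _ wnn]) (use hbound in force)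
  have "ennreal \<bar>h 1 - h 0\<bar> \<le> energy \<alpha> \<gamma>"
    using up dn by (cases "h 1 - h 0 \<ge> 0") auto
  then show ?thesis by (simp add: hval)
qed

end

context cutfun begin

lemma ray_integral:
  assumes a: "a \<in> {0..pi}" and b: "b \<in> {0..pi}" and gnn: "\<And>s. s \<in> {0..pi} \<Longrightarrow> 0 \<le> g s"
  shows "(\<integral>\<^sup>+ t. indicator {0..1} t * ennreal (g (a + t*(b-a)) * \<bar>b-a\<bar>) \<partial>lborel) = ennreal \<bar>G b - G a\<bar>"
proof (cases "a = b")
  case True
  then show ?thesis by simp
next
  case False
  define p where "p t = a + t*(b-a)" for t
  have pin: "p t \<in> {0<..<pi}" if t: "t \<in> {0<..<1}" for t
  proof (cases "a < b")
    case True
    have "0 < t*(b-a)" "0 < (1-t)*(b-a)" using t True by auto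
    then show ?thesis using a b by (auto simp: p_def algebra_simps)
  next
    case False
    then have ba: "b < a" using \<open>a \<noteq> b\<close> by auto
    have "0 < t*(a-b)" "0 < (1-t)*(a-b)" using t ba by auto
    then show ?thesis using a b by (auto simp: p_def algebra_simps)
  qed
  have pin01: "p t \<in> {0..pi}" if t: "t \<in> {0..1}" for t
  proof -
    have "0 \<le> t*b" "0 \<le> (1-t)*a" "t*b \<le> t*pi" "(1-t)*a \<le> (1-t)*pi"
      using t a b by (auto intro: mult_left_mono)
    then show ?thesis by (auto simp: p_def algebra_simps)
  qed
  have deriv: "((\<lambda>t. G (p t)) has_vector_derivative g (p t) * (b - a)) (at t)" if t: "t \<in> {0<..<1}" for t
  proof -
    have "(p has_real_derivative (b - a)) (at t)"
      unfolding p_def by (auto intro!: derivative_eq_intros)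
    from DERIV_chain2[OF G_deriv[OF pin[OF t]] this] show ?thesis
      by (simp add: has_real_derivative_iff_has_vector_derivative)
  qed
  have cont: "continuous_on {0..1} (\<lambda>t. G (p t))"
  proof (rule continuous_on_compose2[OF G_cont])
    show "continuous_on {0..1} p" unfolding p_def by (intro continuous_intros)
  qed (use pin01 in auto)
  have ftc: "((\<lambda>t. g (p t) * (b - a)) has_integral G (p 1) - G (p 0)) {0..1}"
    by (rule fundamental_theorem_of_calculus_interior_strong[of "{}"]) (use deriv cont in auto)
  then have ftc': "((\<lambda>t. g (p t) * (b - a)) has_integral G b - G a) {0..1}"
    by (simp add: p_def)
  show ?thesis
  proof (cases "a < b")
    case True
    have nn: "0 \<le> g (p t) * (b - a)" if "t \<in> {0..1}" for t
      using gnn[OF pin01[OF that]] True by simp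
    have "0 \<le> G b - G a" by (rule has_integral_nonneg[OF ftc' nn])
    have "(\<integral>\<^sup>+ t. ennreal (g (p t) * (b - a)) * indicator {0..1} t \<partial>lborel) = ennreal (G b - G a)"
      by (rule nn_integral_has_integral_lebesgue'[OF nn ftc'])
    then show ?thesis using True \<open>0 \<le> G b - G a\<close>
      by (simp add: p_def mult.commute)
  next
    case False
    then have ba: "b < a" using \<open>a \<noteq> b\<close> by auto
    have ftc2: "((\<lambda>t. g (p t) * \<bar>b - a\<bar>) has_integral G a - G b) {0..1}"
      using has_integral_neg[OF ftc'] ba by (simp add: algebra_simps)
    have nn: "0 \<le> g (p t) * \<bar>b - a\<bar>" if "t \<in> {0..1}" for t
      using gnn[OF pin01[OF that]] by simp
    have "0 \<le> G a - G b" by (rule has_integral_nonneg[OF ftc2 nn])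
    have "(\<integral>\<^sup>+ t. ennreal (g (p t) * \<bar>b - a\<bar>) * indicator {0..1} t \<partial>lborel) = ennreal (G a - G b)"
      by (rule nn_integral_has_integral_lebesgue'[OF nn ftc2])
    then show ?thesis using \<open>0 \<le> G a - G b\<close>
      by (simp add: p_def mult.commute abs_minus_commute)
  qed
qed

end

lemma mono_limit:
  fixes gs :: "nat \<Rightarrow> real \<Rightarrow> real" and w0 :: "real \<Rightarrow> real"
  assumes cont: "\<And>n. continuous_on UNIV (gs n)"
   and nn: "\<And>n s. s \<in> {0..pi} \<Longrightarrow> 0 \<le> gs n s"
   and mono: "\<And>n s. s \<in> {0..pi} \<Longrightarrow> gs n s \<le> gs (Suc n) s"
   and ev: "\<And>s. s \<in> {0<..<pi} \<Longrightarrow> eventually (\<lambda>n. gs n s = w0 s) sequentially"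
   and a: "a \<in> {0..pi}" and b: "b \<in> {0..pi}"
   and le: "\<And>n. (\<integral>\<^sup>+ t. indicator {0..1} t * ennreal (gs n (a + t*(b-a)) * \<bar>b-a\<bar>) \<partial>lborel) \<le> E"
  shows "(\<integral>\<^sup>+ t. indicator {0..1} t * ennreal (w0 (a + t*(b-a)) * \<bar>b-a\<bar>) \<partial>lborel) \<le> E"
proof (cases "a = b")
  case True
  then show ?thesis by simp
next
  case False
  define p where "p t = a + t*(b-a)" for t
  have pin01: "p t \<in> {0..pi}" if t: "t \<in> {0..1}" for t
  proof -
    have "0 \<le> t*b" "0 \<le> (1-t)*a" "t*b \<le> t*pi" "(1-t)*a \<le> (1-t)*pi"
      using t a b by (auto intro: mult_left_mono)
    then show ?thesis by (auto simp: p_def algebra_simps)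
  qed
  define F where "F n t = indicator {0..1} t * ennreal (gs n (p t) * \<bar>b-a\<bar>)" for n t
  have cgp: "continuous_on UNIV (\<lambda>t. gs n (p t))" for n
    unfolding p_def by (rule continuous_on_compose2[OF cont[of n]]) (auto intro!: continuous_intros)
  have mgp[measurable]: "(\<lambda>t. gs n (p t)) \<in> borel_measurable borel" for n
    by (rule borel_measurable_continuous_onI[OF cgp])
  have meas: "F n \<in> borel_measurable lborel" for n
    unfolding F_def by measurable
  have inc: "incseq F"
  proof (rule incseq_SucI, rule le_funI)
    fix n t
    show "F n t \<le> F (Suc n) t"
    proof (cases "t \<in> {0..1}")
      case True
      have "gs n (p t) * \<bar>b-a\<bar> \<le> gs (Suc n) (p t) * \<bar>b-a\<bar>"
        by (rule mult_right_mono[OF mono[OF pin01[OF True]]]) simp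
      then show ?thesis using True by (simp add: F_def ennreal_leI)
    qed (simp add: F_def)
  qed
  have "(\<integral>\<^sup>+ t. (SUP n. F n t) \<partial>lborel) = (SUP n. integral\<^sup>N lborel (F n))"
    by (rule nn_integral_monotone_convergence_SUP[OF inc meas])
  also have "\<dots> \<le> E"
    using le by (intro SUP_least) (simp add: F_def[abs_def] p_def)
  finally have supE: "(\<integral>\<^sup>+ t. (SUP n. F n t) \<partial>lborel) \<le> E" .
  have ae: "AE t in lborel. indicator {0..1} t * ennreal (w0 (p t) * \<bar>b-a\<bar>) = (SUP n. F n t)"
    using AE_lborel_singleton[of "-a/(b-a)"] AE_lborel_singleton[of "(pi-a)/(b-a)"]
  proof eventually_elim
    case (elim t)
    have ba: "b - a \<noteq> 0" using False by simp
    show ?case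
    proof (cases "t \<in> {0..1}")
      case False
      then show ?thesis by (simp add: F_def)
    next
      case True
      have "p t \<noteq> 0"
      proof
        assume "p t = 0"
        then have "t = -a/(b-a)" using ba by (simp add: p_def field_simps)
        then show False using elim by simp
      qed
      moreover have "p t \<noteq> pi"
      proof
        assume "p t = pi"
        then have "t = (pi-a)/(b-a)" using ba by (simp add: p_def field_simps)
        then show False using elim by simp
      qed
      ultimately have pt: "p t \<in> {0<..<pi}" using pin01[OF True] by auto
      have ev': "eventually (\<lambda>n. F n t = indicator {0..1} t * ennreal (w0 (p t) * \<bar>b-a\<bar>)) sequentially"
        using ev[OF pt] by eventually_elim (simp add: F_def)
      have lim1: "(\<lambda>n. F n t) \<longlonglongrightarrow> indicator {0..1} t * ennreal (w0 (p t) * \<bar>b-a\<bar>)"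
        by (rule tendsto_eventually[OF ev'])
      have incn: "incseq (\<lambda>n. F n t)" using inc by (auto simp: incseq_def le_fun_def)
      have lim2: "(\<lambda>n. F n t) \<longlonglongrightarrow> (SUP n. F n t)" by (rule LIMSEQ_SUP[OF incn])
      show ?thesis using LIMSEQ_unique[OF lim1 lim2] .
    qed
  qed
  have "(\<integral>\<^sup>+ t. indicator {0..1} t * ennreal (w0 (p t) * \<bar>b-a\<bar>) \<partial>lborel) = (\<integral>\<^sup>+ t. (SUP n. F n t) \<partial>lborel)"
    by (rule nn_integral_cong_AE[OF ae])
  then show ?thesis using supE by (simp add: p_def)
qed

definition cutf :: "real \<Rightarrow> real \<Rightarrow> real" where
  "cutf e s = max 0 (min 1 (min ((s - e)/e) ((pi - e - s)/e)))"

definition eps :: "nat \<Rightarrow> real" where "eps n = 1 / (real n + 1)"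

lemma eps_pos: "0 < eps n" by (simp add: eps_def)

lemma eps_mono: "eps (Suc n) \<le> eps n"
  by (simp add: eps_def frac_le)

lemma cutf_cont: "0 < e \<Longrightarrow> continuous_on UNIV (cutf e)"
  unfolding cutf_def by (intro continuous_intros) auto

lemma cutf_range: "0 \<le> cutf e s" "cutf e s \<le> 1"
  by (auto simp: cutf_def)

lemma cutf_low: "0 < e \<Longrightarrow> s \<le> e \<Longrightarrow> cutf e s = 0"
proof -
  assume "0 < e" "s \<le> e"
  then have "(s - e)/e \<le> 0" by (intro divide_nonpos_pos) auto
  then show ?thesis unfolding cutf_def by linarith
qed

lemma cutf_high: "0 < e \<Longrightarrow> pi - e \<le> s \<Longrightarrow> cutf e s = 0"
proof -
  assume "0 < e" "pi - e \<le> s"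
  then have "(pi - e - s)/e \<le> 0" by (intro divide_nonpos_pos) auto
  then show ?thesis unfolding cutf_def by linarith
qed

lemma cutf_mono:
  assumes "0 < e'" "e' \<le> e" "s \<in> {0..pi}"
  shows "cutf e s \<le> cutf e' s"
proof -
  have "(s - e)/e = s/e - 1" "(s - e')/e' = s/e' - 1"
    "(pi - e - s)/e = (pi - s)/e - 1" "(pi - e' - s)/e' = (pi - s)/e' - 1"
    using assms by (auto simp: field_simps)
  moreover have "s/e \<le> s/e'" "(pi - s)/e \<le> (pi - s)/e'"
    using assms by (auto intro!: divide_left_mono)
  ultimately show ?thesis unfolding cutf_def
    by (intro max.mono min.mono order_refl) auto
qed

lemma eps_ev: "0 < c \<Longrightarrow> eventually (\<lambda>n. eps n < c) sequentially"
proof -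
  assume c: "0 < c"
  have "eps \<longlonglongrightarrow> 0"
    unfolding eps_def using LIMSEQ_inverse_real_of_nat by (simp add: inverse_eq_divide add.commute)
  then show ?thesis using c by (rule order_tendstoD)
qed

lemma cutf_ev:
  assumes "s \<in> {0<..<pi}"
  shows "eventually (\<lambda>n. cutf (eps n) s = 1 \<and> eps n < s) sequentially"
proof -
  have c: "0 < min s (pi - s) / 2" using assms by auto
  show ?thesis using eps_ev[OF c]
  proof eventually_elim
    case (elim n)
    have "1 \<le> (s - eps n)/eps n" "1 \<le> (pi - eps n - s)/eps n"
      using elim eps_pos[of n] by (auto simp: field_simps)
    then show ?case using elim eps_pos[of n] unfolding cutf_def by auto
  qed
qed


definition e1 :: "real^3" where "e1 = vector [1,0,0]"
definition e2 :: "real^3" where "e2 = vector [0,1,0]"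
definition e3 :: "real^3" where "e3 = vector [0,0,1]"

lemma vec3_alt: "(vector [a,b,c] :: real^3) = a *\<^sub>R e1 + b *\<^sub>R e2 + c *\<^sub>R e3"
  by (simp add: vec_eq_iff forall_3 e1_def e2_def e3_def)

lemma ray_deriv:
  "((\<lambda>t. Psi (a + t*c) v) has_vector_derivative
     vector [c * cos (a+t*c) * cos v, c * cos (a+t*c) * sin v, - c * sin (a+t*c)]) (at t)"
  unfolding Psi_def vec3_alt
  by (auto intro!: derivative_eq_intros simp: algebra_simps)

lemma norm_ray_deriv:
  "norm (vector_derivative (\<lambda>t. Psi (a + t*c) v) (at t)) = \<bar>c\<bar>"
proof -
  define u where "u = a + t*c"
  have "(c * cos u * cos v)^2 + (c * cos u * sin v)^2 + (c * sin u)^2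
        = c^2 * ((cos u)^2 * ((sin v)^2 + (cos v)^2) + (sin u)^2)"
    by algebra
  also have "\<dots> = c^2" by simp
  finally have eq: "(c * cos u * cos v)^2 + (c * cos u * sin v)^2 + (c * sin u)^2 = c^2" .
  have "vector_derivative (\<lambda>t. Psi (a + t*c) v) (at t) =
      vector [c * cos u * cos v, c * cos u * sin v, - c * sin u]"
    unfolding u_def by (rule vector_derivative_at[OF ray_deriv])
  then show ?thesis
    by (simp add: norm_eq_sqrt_inner inner3 eq flip: power2_eq_square)
qed

lemma sdistN_Psi: "sdistN (Psi u v) = arccos (cos u)"
  by (simp add: sdistN_def Psi_N)

lemma energy_ray:
  "energy \<alpha> (\<lambda>t. Psi (a + t*c) v) =
   (\<integral>\<^sup>+ t. indicator {0..1} t * ennreal (arccos (cos (a + t*c)) powr \<alpha> * \<bar>c\<bar>) \<partial>lborel)"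
  unfolding energy_def by (simp add: norm_ray_deriv sdistN_Psi)

lemma seg01: "t \<in> {0..1} \<Longrightarrow> a \<in> {0..pi} \<Longrightarrow> b \<in> {0..pi} \<Longrightarrow> a + t*(b-a) \<in> {0..pi}"
proof -
  assume t: "t \<in> {0..1}" and a: "a \<in> {0..pi}" and b: "b \<in> {0..pi}"
  have "0 \<le> t*b" "0 \<le> (1-t)*a" "t*b \<le> t*pi" "(1-t)*a \<le> (1-t)*pi"
    using t a b by (auto intro: mult_left_mono)
  then show ?thesis by (auto simp: algebra_simps)
qed

lemma part1:
  assumes u1: "u1 \<in> {0..pi}" and u2: "u2 \<in> {0..pi}" and adm: "admissible \<gamma> (Psi u1 v0) (Psi u2 v0)"
  shows "energy \<alpha> (\<lambda>t. Psi (u1 + t * (u2 - u1)) v0) \<le> energy \<alpha> \<gamma>"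
proof -
  define gs where "gs n s = cutf (eps n) s * (max s (eps n)) powr \<alpha>" for n s
  define w0 where "w0 s = s powr \<alpha>" for s :: real
  have cont: "continuous_on UNIV (gs n)" for n
  proof -
    have "continuous_on UNIV (\<lambda>s. (max s (eps n)) powr \<alpha>)"
    proof (rule continuous_on_powr')
      show "continuous_on UNIV (\<lambda>s. max s (eps n))" by (intro continuous_intros)
      show "\<forall>x\<in>UNIV. 0 \<le> max x (eps n) \<and> (max x (eps n) = 0 \<longrightarrow> 0 < \<alpha>)"
        using eps_pos[of n] by (auto simp: max_def)
    qed (intro continuous_intros)
    then show ?thesis unfolding gs_def[abs_def]
      by (intro continuous_on_mult cutf_cont eps_pos)
  qed
  have nn: "0 \<le> gs n s" for n s by (simp add: gs_def cutf_range)
  have mono: "gs n s \<le> gs (Suc n) s" if s: "s \<in> {0..pi}" for n s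
  proof (cases "s \<le> eps n")
    case True
    then have "gs n s = 0" by (simp add: gs_def cutf_low eps_pos)
    then show ?thesis using nn by simp
  next
    case False
    then have m: "max s (eps n) = s" "max s (eps (Suc n)) = s" using eps_mono[of n] by auto
    have "cutf (eps n) s \<le> cutf (eps (Suc n)) s"
      by (rule cutf_mono[OF eps_pos eps_mono s])
    then show ?thesis unfolding gs_def m by (rule mult_right_mono) simp
  qed
  have ev: "eventually (\<lambda>n. gs n s = w0 s) sequentially" if s: "s \<in> {0<..<pi}" for s
    using cutf_ev[OF s] by eventually_elim (simp add: gs_def w0_def max_def)
  have pw: "\<gamma> piecewise_C1_differentiable_on {0..1}" and sph: "\<gamma> ` {0..1} \<subseteq> sphere 0 1"
    and g0: "\<gamma> 0 = Psi u1 v0" and g1: "\<gamma> 1 = Psi u2 v0"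
    using adm by (auto simp: admissible_def)
  have le: "(\<integral>\<^sup>+ t. indicator {0..1} t * ennreal (gs n (u1 + t*(u2-u1)) * \<bar>u2-u1\<bar>) \<partial>lborel) \<le> energy \<alpha> \<gamma>" for n
  proof -
    interpret I: cutfun "gs n" "eps n"
    proof
      show "continuous_on UNIV (gs n)" by (rule cont)
      show "0 < eps n" by (rule eps_pos)
      show "gs n s = 0" if "s \<in> {0..eps n}" for s
        using that by (simp add: gs_def cutf_low eps_pos)
      show "gs n s = 0" if "s \<in> {pi - eps n..pi}" for s
        using that by (simp add: gs_def cutf_high eps_pos)
    qed
    have bound: "\<bar>gs n (arccos (x \<bullet> NP))\<bar> \<le> sdistN x powr \<alpha>" if "x \<in> sphere 0 1" for x
    proof -
      define s where "s = arccos (x \<bullet> NP)"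
      have sd: "sdistN x = s" by (simp add: sdistN_def s_def)
      show ?thesis
      proof (cases "s \<le> eps n")
        case True
        then show ?thesis by (simp add: gs_def cutf_low eps_pos s_def[symmetric] sd)
      next
        case False
        then have "max s (eps n) = s" by auto
        then have "gs n s = cutf (eps n) s * s powr \<alpha>" by (simp add: gs_def)
        also have "\<dots> \<le> 1 * s powr \<alpha>" by (rule mult_right_mono) (simp_all add: cutf_range)
        finally show ?thesis using nn[of n s] by (simp add: s_def[symmetric] sd)
      qed
    qed
    have "(\<integral>\<^sup>+ t. indicator {0..1} t * ennreal (gs n (u1 + t*(u2-u1)) * \<bar>u2-u1\<bar>) \<partial>lborel)
        = ennreal \<bar>I.G u2 - I.G u1\<bar>"
      by (rule I.ray_integral[OF u1 u2 nn])
    also have "\<dots> = ennreal \<bar>I.G (arccos (\<gamma> 1 \<bullet> NP)) - I.G (arccos (\<gamma> 0 \<bullet> NP))\<bar>"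
      using u1 u2 by (simp add: g0 g1 Psi_N arccos_cos)
    also have "\<dots> \<le> energy \<alpha> \<gamma>"
      by (rule I.energy_lower[OF pw sph norm_NP bound])
    finally show ?thesis .
  qed
  have "(\<integral>\<^sup>+ t. indicator {0..1} t * ennreal (w0 (u1 + t*(u2-u1)) * \<bar>u2-u1\<bar>) \<partial>lborel) \<le> energy \<alpha> \<gamma>"
    by (rule mono_limit[OF cont nn mono ev u1 u2 le])
  moreover have "energy \<alpha> (\<lambda>t. Psi (u1 + t * (u2 - u1)) v0) =
      (\<integral>\<^sup>+ t. indicator {0..1} t * ennreal (w0 (u1 + t*(u2-u1)) * \<bar>u2-u1\<bar>) \<partial>lborel)"
    unfolding energy_ray
  proof (rule nn_integral_cong)
    fix t
    show "indicator {0..1} t * ennreal (arccos (cos (u1 + t * (u2 - u1))) powr \<alpha> * \<bar>u2 - u1\<bar>) =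
          indicator {0..1} t * ennreal (w0 (u1 + t * (u2 - u1)) * \<bar>u2 - u1\<bar>)"
    proof (cases "t \<in> {0..1}")
      case True
      have "u1 + t*(u2-u1) \<in> {0..pi}" by (rule seg01[OF True u1 u2])
      then show ?thesis by (simp add: arccos_cos w0_def)
    qed simp
  qed
  ultimately show ?thesis by simp
qed

lemma part2:
  assumes \<alpha>: "\<alpha> > 0" and u1: "0 \<le> u1" and u2: "0 \<le> u2" and L: "u1 + u2 \<le> pi"
    and adm: "admissible \<gamma> (Psi u1 v0) (Psi u2 (v0 + pi))"
  shows "energy \<alpha> (\<lambda>t. Psi (t * (u1 + u2) - u1) (v0 + pi)) \<le> energy \<alpha> \<gamma>"
proof -
  define L where "L = u1 + u2"
  define p1 where "p1 = Psi u1 v0"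
  define gs where "gs n s = cutf (eps n) s * \<bar>s - u1\<bar> powr \<alpha>" for n s
  define w0 where "w0 s = \<bar>s - u1\<bar> powr \<alpha>" for s :: real
  have L0: "0 \<in> {0..pi}" and Lpi: "L \<in> {0..pi}" using u1 u2 L by (auto simp: L_def)
  have cont: "continuous_on UNIV (gs n)" for n
  proof -
    have "continuous_on UNIV (\<lambda>s. \<bar>s - u1\<bar> powr \<alpha>)"
      by (rule continuous_on_powr') (use \<alpha> in \<open>auto intro!: continuous_intros\<close>)
    then show ?thesis unfolding gs_def[abs_def]
      by (intro continuous_on_mult cutf_cont eps_pos)
  qed
  have nn: "0 \<le> gs n s" for n s by (simp add: gs_def cutf_range)
  have mono: "gs n s \<le> gs (Suc n) s" if s: "s \<in> {0..pi}" for n s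
  proof -
    have "cutf (eps n) s \<le> cutf (eps (Suc n)) s"
      by (rule cutf_mono[OF eps_pos eps_mono s])
    then show ?thesis unfolding gs_def by (rule mult_right_mono) simp
  qed
  have ev: "eventually (\<lambda>n. gs n s = w0 s) sequentially" if s: "s \<in> {0<..<pi}" for s
    using cutf_ev[OF s] by eventually_elim (simp add: gs_def w0_def)
  have pw: "\<gamma> piecewise_C1_differentiable_on {0..1}" and sph: "\<gamma> ` {0..1} \<subseteq> sphere 0 1"
    and g0: "\<gamma> 0 = p1" and g1: "\<gamma> 1 = Psi u2 (v0 + pi)"
    using adm by (auto simp: admissible_def p1_def)
  have np1: "norm p1 = 1" by (simp add: p1_def norm_Psi)
  have u1pi: "u1 \<le> pi" using u2 L by simp
  have u1eq: "arccos (p1 \<bullet> NP) = u1" using u1 u1pi by (simp add: p1_def Psi_N arccos_cos)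
  have e0: "arccos (\<gamma> 0 \<bullet> p1) = 0"
  proof -
    have "p1 \<bullet> p1 = 1" using np1 by (simp add: norm_eq_sqrt_inner)
    then show ?thesis by (simp add: g0)
  qed
  have e1: "arccos (\<gamma> 1 \<bullet> p1) = L"
  proof -
    have "\<gamma> 1 \<bullet> p1 = cos L"
      by (simp add: g1 p1_def Psi_inner L_def cos_add algebra_simps)
    then show ?thesis using Lpi by (simp add: arccos_cos)
  qed
  have le: "(\<integral>\<^sup>+ t. indicator {0..1} t * ennreal (gs n (0 + t*(L-0)) * \<bar>L-0\<bar>) \<partial>lborel) \<le> energy \<alpha> \<gamma>" for n
  proof -
    interpret I: cutfun "gs n" "eps n"
    proof
      show "continuous_on UNIV (gs n)" by (rule cont)
      show "0 < eps n" by (rule eps_pos)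
      show "gs n s = 0" if "s \<in> {0..eps n}" for s
        using that by (simp add: gs_def cutf_low eps_pos)
      show "gs n s = 0" if "s \<in> {pi - eps n..pi}" for s
        using that by (simp add: gs_def cutf_high eps_pos)
    qed
    have bound: "\<bar>gs n (arccos (x \<bullet> p1))\<bar> \<le> sdistN x powr \<alpha>" if x: "x \<in> sphere 0 1" for x
    proof -
      define s where "s = arccos (x \<bullet> p1)"
      define d where "d = arccos (x \<bullet> NP)"
      have nx: "norm x = 1" using x by simp
      have t1: "arccos (p1 \<bullet> NP) \<le> arccos (p1 \<bullet> x) + arccos (x \<bullet> NP)"
        by (rule sph_tri[OF np1 nx norm_NP])
      have t2: "arccos (x \<bullet> p1) \<le> arccos (x \<bullet> NP) + arccos (NP \<bullet> p1)"
        by (rule sph_tri[OF nx norm_NP np1])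
      have sd: "\<bar>s - u1\<bar> \<le> d"
        using t1 t2 u1eq by (simp add: s_def d_def inner_commute)
      have "gs n s \<le> 1 * \<bar>s - u1\<bar> powr \<alpha>"
        unfolding gs_def by (rule mult_right_mono) (simp_all add: cutf_range)
      also have "\<dots> \<le> d powr \<alpha>"
        using sd \<alpha> by (simp add: powr_mono2)
      finally show ?thesis using nn[of n s] by (simp add: s_def[symmetric] sdistN_def d_def[symmetric])
    qed
    have "(\<integral>\<^sup>+ t. indicator {0..1} t * ennreal (gs n (0 + t*(L-0)) * \<bar>L-0\<bar>) \<partial>lborel)
        = ennreal \<bar>I.G L - I.G 0\<bar>"
      by (rule I.ray_integral[OF L0 Lpi nn])
    also have "\<dots> = ennreal \<bar>I.G (arccos (\<gamma> 1 \<bullet> p1)) - I.G (arccos (\<gamma> 0 \<bullet> p1))\<bar>"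
      by (simp add: e0 e1)
    also have "\<dots> \<le> energy \<alpha> \<gamma>"
      by (rule I.energy_lower[OF pw sph np1 bound])
    finally show ?thesis .
  qed
  have "(\<integral>\<^sup>+ t. indicator {0..1} t * ennreal (w0 (0 + t*(L-0)) * \<bar>L-0\<bar>) \<partial>lborel) \<le> energy \<alpha> \<gamma>"
    by (rule mono_limit[OF cont nn mono ev L0 Lpi le])
  moreover have "(\<lambda>t. Psi (t * (u1 + u2) - u1) (v0 + pi)) = (\<lambda>t. Psi (- u1 + t * L) (v0 + pi))"
    by (simp add: L_def algebra_simps)
  moreover have "energy \<alpha> (\<lambda>t. Psi (- u1 + t * L) (v0 + pi)) =
      (\<integral>\<^sup>+ t. indicator {0..1} t * ennreal (w0 (0 + t*(L-0)) * \<bar>L-0\<bar>) \<partial>lborel)"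
    unfolding energy_ray
  proof (rule nn_integral_cong)
    fix t
    show "indicator {0..1} t * ennreal (arccos (cos (- u1 + t * L)) powr \<alpha> * \<bar>L\<bar>) =
          indicator {0..1} t * ennreal (w0 (0 + t * (L - 0)) * \<bar>L - 0\<bar>)"
    proof (cases "t \<in> {0..1}")
      case True
      have "0 \<le> t * L" "t * L \<le> L" using True Lpi by (auto simp: mult_left_le_one_le)
      then have "\<bar>- u1 + t * L\<bar> \<le> pi" using u1 u2 L by (auto simp: L_def abs_le_iff)
      then show ?thesis by (simp add: arccos_cos_abs w0_def abs_minus_commute add.commute)
    qed simp
  qed
  ultimately show ?thesis by simp
qed

theorem theorem3p7:
  fixes \<alpha> :: real
  assumes "\<alpha> \<noteq> 0"
  shows "(\<forall>u1 u2 v0 \<gamma>. u1 \<in> {0..pi} \<and> u2 \<in> {0..pi} \<and> admissible \<gamma> (Psi u1 v0) (Psi u2 v0) \<longrightarrow>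
            energy \<alpha> (\<lambda>t. Psi (u1 + t * (u2 - u1)) v0) \<le> energy \<alpha> \<gamma>)
       \<and> (\<alpha> > 0 \<longrightarrow>
          (\<forall>u1 u2 v0 \<gamma>. 0 \<le> u1 \<and> 0 \<le> u2 \<and> u1 + u2 \<le> pi \<and>
               admissible \<gamma> (Psi u1 v0) (Psi u2 (v0 + pi)) \<longrightarrow>
            energy \<alpha> (\<lambda>t. Psi (t * (u1 + u2) - u1) (v0 + pi)) \<le> energy \<alpha> \<gamma>))"
  using part1 part2 by blast

end
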